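(* Let $\widetilde V$ be a real Hilbert space with inner product $M(\cdot,\cdot)$ and norm $\|\cdot\|_M$. Let $N(\cdot,\cdot)$ be a symmetric positive semi-definite bilinear form on $\widetilde V$ with seminorm $\|\cdot\|_N$, and assume $\|\cdot\|_N$ is compact with respect to $\|\cdot\|_M$ (every $\|\cdot\|_M$-bounded sequence in $\widetilde V$ has a subsequence that is Cauchy in $\|\cdot\|_N$). Let $V$ and $V_h$ be closed linear subspaces of $\widetilde V$, with $V_h$ finite-dimensional. Let $\lambda_1\le\lambda_2\le\cdots$ ($d$ of them, $d\in\mathbb N\cup\{\infty\}$) and $0<\lambda_{h,1}\le\cdots\le\lambda_{h,n}$ be the eigenvalues defined in the context, and let $P_h:\widetilde V\to V_h$ be the $M$-orthogonal projection. Suppose there exists a positive constant $C_h$ such that $$\|u-P_hu\|_N\le C_h\|u-P_hu\|_M\quad\forall u\in V.$$ Then $$\lambda_k\ge\frac{\lambda_{h,k}}{1+C_h^2\lambda_{h,k}},\qquad k=1,2,\ldots,\min(n,d).$$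
   Context: Define $\mathcal K:V\to V$ by $M(\mathcal Kf,v)=N(f,v)$ for all $v\in V$; then $\mathrm{Ker}(\mathcal K)=\{v\in V: N(v,v)=0\}$. Let $\mathrm{Ker}(\mathcal K)^\perp$ be its $M$-orthogonal complement in $V$ and $d=\dim \mathrm{Ker}(\mathcal K)^\perp$ (possibly infinite). The eigenvalues $\lambda_k$ ($k=1,\ldots,d$, increasing, repeated according to multiplicity) are those of the problem: find $(\lambda,u)\in\mathbb R\times \mathrm{Ker}(\mathcal K)^\perp$ with $M(u,v)=\lambda N(u,v)$ for all $v\in\mathrm{Ker}(\mathcal K)^\perp$ (equivalently $\lambda_k=\mu_k^{-1}$ where $\mu_1\ge\mu_2\ge\cdots>0$ are the nonzero eigenvalues of the compact self-adjoint operator $\mathcal K$). Analogously, $\mathrm{Ker}(\mathcal K_h)=\{v_h\in V_h:N(v_h,v_h)=0\}$, $\mathrm{Ker}(\mathcal K_h)^\perp$ is its $M$-orthogonal complement in $V_h$, $n=\dim\mathrm{Ker}(\mathcal K_h)^\perp$, and $0<\lambda_{h,1}\le\cdots\le\lambda_{h,n}$ are the eigenvalues of: find $(\lambda_h,u_h)\in\mathbb R\times\mathrm{Ker}(\mathcal K_h)^\perp$ with $M(u_h,v_h)=\lambda_hN(u_h,v_h)$ for all $v_h\in\mathrm{Ker}(\mathcal K_h)^\perp$. The projection $P_h$ is defined by $M(u-P_hu,v_h)=0$ for all $v_h\in V_h$. *)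

theory Defs
  imports "HOL-Analysis.Analysis"
begin

text \<open>The ambient Hilbert space is a type of class real_inner + complete_space;
  the inner product M is the library inner product and the M-norm is norm.\<close>

definition seminormN :: "('a \<Rightarrow> 'a \<Rightarrow> real) \<Rightarrow> 'a \<Rightarrow> real" where
  "seminormN N u = sqrt (N u u)"

definition kerN :: "('a::real_inner \<Rightarrow> 'a \<Rightarrow> real) \<Rightarrow> 'a set \<Rightarrow> 'a set" where
  "kerN N W = {v \<in> W. N v v = 0}"

definition kerperp :: "('a::real_inner \<Rightarrow> 'a \<Rightarrow> real) \<Rightarrow> 'a set \<Rightarrow> 'a set" where
  "kerperp N W = {u \<in> W. \<forall>v \<in> kerN N W. inner u v = 0}"

definition eigpair :: "('a::real_inner \<Rightarrow> 'a \<Rightarrow> real) \<Rightarrow> 'a set \<Rightarrow> real \<Rightarrow> 'a \<Rightarrow> bool" where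
  "eigpair N W lam u \<longleftrightarrow> u \<in> kerperp N W \<and> u \<noteq> 0 \<and>
     (\<forall>v \<in> kerperp N W. inner u v = lam * N u v)"

text \<open>"dim S \<ge> k" for a possibly infinite-dimensional set: S contains k linearly
  independent vectors.\<close>
definition dim_ge :: "'a::real_vector set \<Rightarrow> nat \<Rightarrow> bool" where
  "dim_ge S k \<longleftrightarrow> (\<exists>B. B \<subseteq> S \<and> finite B \<and> card B = k \<and> independent B)"

text \<open>k-th eigenvalue (k = 1, 2, ...) in increasing order, repeated according to
  multiplicity: the least lam such that the eigenvectors with eigenvalue \<le> lam
  span a space of dimension \<ge> k.\<close>
definition eigval :: "('a::real_inner \<Rightarrow> 'a \<Rightarrow> real) \<Rightarrow> 'a set \<Rightarrow> nat \<Rightarrow> real" where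
  "eigval N W k = Inf {lam. dim_ge (span {u. \<exists>mu \<le> lam. eigpair N W mu u}) k}"

end

theory Submission
  imports Defs
begin


locale Nform =
  fixes N :: "'a::{real_inner, complete_space} \<Rightarrow> 'a \<Rightarrow> real"
  assumes bil: "bilinear N"
    and Nsym: "N u v = N v u"
    and psd: "N u u \<ge> 0"
    and cpt: "bounded (range (x :: nat \<Rightarrow> 'a)) \<Longrightarrow>
          (\<exists>r :: nat \<Rightarrow> nat. strict_mono r \<and> (\<forall>e>0. \<exists>K. \<forall>m\<ge>K. \<forall>n\<ge>K.
               N (x (r m) - x (r n)) (x (r m) - x (r n)) < e))"
begin

lemma linR: "linear (N x)" using bil unfolding bilinear_def by auto
lemma linL: "linear (\<lambda>x. N x y)" using bil unfolding bilinear_def by auto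

lemma addR: "N a (b + c) = N a b + N a c" using linear_add[OF linR] .
lemma addL: "N (a + b) c = N a c + N b c" using linear_add[OF linL, of a b] .
lemma diffR: "N a (b - c) = N a b - N a c" using linear_diff[OF linR] .
lemma diffL: "N (a - b) c = N a c - N b c" using linear_diff[OF linL, of a b] .
lemma scaleR': "N a (t *\<^sub>R b) = t * N a b" using linear_cmul[OF linR] by simp
lemma scaleL: "N (t *\<^sub>R a) b = t * N a b" using linear_cmul[OF linL, of t a] by simp
lemma zeroR: "N a 0 = 0" using linear_0[OF linR] .
lemma zeroL: "N 0 a = 0" using linear_0[OF linL] .
lemma sumR: "N a (sum f S) = (\<Sum>i\<in>S. N a (f i))" using linear_sum[OF linR] .
lemma sumL: "N (sum f S) a = (\<Sum>i\<in>S. N (f i) a)" using linear_sum[OF linL] .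

lemma quad_zero:
  fixes c d :: real
  assumes "\<And>t. t * c + t\<^sup>2 * d \<ge> 0"
  shows "c = 0"
proof (rule ccontr)
  assume c: "c \<noteq> 0"
  define D where "D = \<bar>d\<bar> + 1"
  have D: "D > 0" "\<bar>d\<bar> < D" unfolding D_def by auto
  define t where "t = - c / D"
  have c2: "c\<^sup>2 > 0" using c by simp
  have e1: "t * c = - c\<^sup>2 / D" unfolding t_def by (simp add: power2_eq_square)
  have e2: "t\<^sup>2 * \<bar>d\<bar> = c\<^sup>2 * (\<bar>d\<bar> / D) / D" unfolding t_def
    by (simp add: power2_eq_square power_divide)
  have "\<bar>d\<bar> / D < 1" using D by simp
  then have "c\<^sup>2 * (\<bar>d\<bar> / D) < c\<^sup>2" using mult_strict_left_mono[OF _ c2] by fastforce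
  then have "c\<^sup>2 * (\<bar>d\<bar> / D) / D < c\<^sup>2 / D" by (rule divide_strict_right_mono[OF _ D(1)])
  then have "t * c + t\<^sup>2 * \<bar>d\<bar> < 0" using e1 e2 by linarith
  moreover have "t * c + t\<^sup>2 * d \<le> t * c + t\<^sup>2 * \<bar>d\<bar>" by (simp add: mult_left_mono)
  ultimately show False using assms[of t] by linarith
qed

lemma N_zero_right: assumes "N b b = 0" shows "N a b = 0"
proof -
  have "\<And>t. t * (2 * N a b) + t\<^sup>2 * N a a \<ge> 0"
  proof -
    fix t :: real
    have "0 \<le> N (b + t *\<^sub>R a) (b + t *\<^sub>R a)" by (rule psd)
    also have "\<dots> = N b b + 2 * t * N a b + t\<^sup>2 * N a a"
      by (simp add: addL addR scaleL scaleR' Nsym[of b a] power2_eq_square algebra_simps)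
    finally show "t * (2 * N a b) + t\<^sup>2 * N a a \<ge> 0" using assms by (simp add: algebra_simps)
  qed
  from quad_zero[OF this] show ?thesis by simp
qed

lemma CS: "(N a b)\<^sup>2 \<le> N a a * N b b"
proof (cases "N b b = 0")
  case True then show ?thesis using N_zero_right[of b a] psd by simp
next
  case False
  then have pos: "N b b > 0" using psd[of b] by simp
  define t where "t = N a b / N b b"
  have "0 \<le> N (a - t *\<^sub>R b) (a - t *\<^sub>R b)" by (rule psd)
  also have "\<dots> = N a a - 2 * t * N a b + t\<^sup>2 * N b b"
    by (simp add: diffL diffR scaleL scaleR' Nsym[of b a] power2_eq_square algebra_simps)
  also have "\<dots> = N a a - (N a b)\<^sup>2 / N b b"
    using pos unfolding t_def by (simp add: field_simps power2_eq_square)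
  finally have "(N a b)\<^sup>2 / N b b \<le> N a a" by simp
  then show ?thesis using pos by (simp add: field_simps)
qed

lemma CS_abs: "\<bar>N a b\<bar> \<le> sqrt (N a a) * sqrt (N b b)"
proof -
  have "\<bar>N a b\<bar> = sqrt ((N a b)\<^sup>2)" by simp
  also have "\<dots> \<le> sqrt (N a a * N b b)" using CS by (rule real_sqrt_le_mono)
  also have "\<dots> = sqrt (N a a) * sqrt (N b b)" by (simp add: real_sqrt_mult)
  finally show ?thesis .
qed

lemma tri: "sqrt (N (a + b) (a + b)) \<le> sqrt (N a a) + sqrt (N b b)"
proof -
  have "N (a + b) (a + b) = N a a + 2 * N a b + N b b"
    by (simp add: addL addR Nsym[of b a])
  also have "\<dots> \<le> N a a + 2 * (sqrt (N a a) * sqrt (N b b)) + N b b"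
    using CS_abs[of a b] by linarith
  also have "\<dots> = (sqrt (N a a) + sqrt (N b b))\<^sup>2"
    using psd[of a] psd[of b] by (simp add: power2_eq_square algebra_simps)
  finally show ?thesis by (intro real_le_lsqrt) (auto simp: psd)
qed

lemma bound: "\<exists>C>0. \<forall>u. N u u \<le> C * (norm u)\<^sup>2"
proof (rule ccontr)
  assume nt: "\<not> ?thesis"
  then have "\<forall>n::nat. \<exists>u. N u u > (real n + 1) * (norm u)\<^sup>2"
  proof (intro allI)
    fix n :: nat
    have "real n + 1 > 0" by simp
    then show "\<exists>u. N u u > (real n + 1) * (norm u)\<^sup>2" using nt by (force simp: not_le)
  qed
  then obtain u where u: "\<And>n. N (u n) (u n) > (real n + 1) * (norm (u n))\<^sup>2" by metis
  have un: "u n \<noteq> 0" for n using u[of n] by (auto simp: zeroL)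
  define y where "y n = (1 / norm (u n)) *\<^sub>R u n" for n
  have ny: "norm (y n) = 1" for n using un by (simp add: y_def)
  have Ny: "N (y n) (y n) > real n + 1" for n
  proof -
    have "N (y n) (y n) = N (u n) (u n) / (norm (u n))\<^sup>2"
      by (simp add: y_def scaleL scaleR' power2_eq_square)
    moreover have nn: "(norm (u n))\<^sup>2 > 0" using un by simp
    moreover have "real n + 1 < N (u n) (u n) / (norm (u n))\<^sup>2"
      using u[of n] nn by (simp add: pos_less_divide_eq)
    ultimately show ?thesis by simp
  qed
  have "bounded (range y)" using ny by (auto simp: bounded_iff)
  from cpt[OF this] obtain r :: "nat \<Rightarrow> nat" where r: "strict_mono r"
    and C: "\<forall>e>0. \<exists>K. \<forall>m\<ge>K. \<forall>n\<ge>K. N (y (r m) - y (r n)) (y (r m) - y (r n)) < e" by (elim exE conjE) auto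
  from C obtain K where K: "\<forall>m\<ge>K. \<forall>n\<ge>K. N (y (r m) - y (r n)) (y (r m) - y (r n)) < 1" by force
  define n where "n = max K (nat \<lceil>2 * N (y (r K)) (y (r K)) + 2\<rceil>)"
  have "N (y (r n)) (y (r n)) \<le> 2 * N (y (r n) - y (r K)) (y (r n) - y (r K)) + 2 * N (y (r K)) (y (r K))"
  proof -
    have "0 \<le> N (y (r n) - 2 *\<^sub>R y (r K)) (y (r n) - 2 *\<^sub>R y (r K))" by (rule psd)
    then show ?thesis
      by (simp add: diffL diffR scaleL scaleR' Nsym[of "y (r K)" "y (r n)"] algebra_simps)
  qed
  also have "\<dots> < 2 + 2 * N (y (r K)) (y (r K))" using K n_def by force
  finally have A: "N (y (r n)) (y (r n)) < 2 + 2 * N (y (r K)) (y (r K))" .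
  have "real n \<le> real (r n)" using seq_suble[OF r, of n] by simp
  moreover have "real n \<ge> 2 * N (y (r K)) (y (r K)) + 2" unfolding n_def by linarith
  ultimately show False using A Ny[of "r n"] by linarith
qed

lemma bbil: "bounded_bilinear N"
proof -
  obtain C where C: "C > 0" "\<And>u. N u u \<le> C * (norm u)\<^sup>2" using bound by blast
  have "\<bar>N a b\<bar> \<le> norm a * norm b * C" for a b
  proof -
    have "\<bar>N a b\<bar> \<le> sqrt (N a a) * sqrt (N b b)" by (rule CS_abs)
    also have "\<dots> \<le> sqrt (C * (norm a)\<^sup>2) * sqrt (C * (norm b)\<^sup>2)"
      using C(1) by (intro mult_mono real_sqrt_le_mono C(2)) (auto simp: psd)
    also have "\<dots> = norm a * norm b * C" using C(1)
      by (simp add: real_sqrt_mult)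
    finally show ?thesis .
  qed
  then show ?thesis
    by (intro bounded_bilinear.intro) (auto simp: addL addR scaleL scaleR' intro: exI[of _ C])
qed

end


context Nform begin

lemma max_exists:
  assumes W: "subspace W" "closed W" and u0: "u0 \<in> W" "N u0 u0 > 0"
  shows "\<exists>x\<in>W. norm x = 1 \<and> N x x > 0 \<and> (\<forall>u\<in>W. N u u \<le> N x x * (norm u)\<^sup>2)
           \<and> (\<forall>v\<in>W. N x v = N x x * inner x v)"
proof -
  obtain C where C: "C>0" "\<And>u. N u u \<le> C * (norm u)\<^sup>2" using bound by blast
  define S where "S = {N u u | u. u \<in> W \<and> norm u = 1}"
  define \<mu> where "\<mu> = Sup S"
  have unit: "(1/norm u) *\<^sub>R u \<in> W \<and> norm ((1/norm u) *\<^sub>R u) = 1 \<and>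
      N ((1/norm u) *\<^sub>R u) ((1/norm u) *\<^sub>R u) = N u u / (norm u)\<^sup>2"
    if "u \<in> W" "u \<noteq> 0" for u
    using W(1) that by (simp add: subspace_scale scaleL scaleR' power2_eq_square)
  have u0nz: "u0 \<noteq> 0"
  proof
    assume "u0 = 0" then show False using u0(2) by (simp add: zeroL)
  qed
  have inS: "N u u / (norm u)\<^sup>2 \<in> S" if "u \<in> W" "u \<noteq> 0" for u
  proof -
    let ?v = "(1/norm u) *\<^sub>R u"
    have "N u u / (norm u)\<^sup>2 = N ?v ?v \<and> ?v \<in> W \<and> norm ?v = 1" using unit[OF that] by simp
    then show ?thesis unfolding S_def by blast
  qed
  have Sne: "S \<noteq> {}" using inS[OF u0(1) u0nz] by blast
  have Sbdd: "bdd_above S"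
  proof (rule bdd_aboveI[of _ C])
    fix s assume "s \<in> S"
    then obtain u where "s = N u u" "norm u = 1" unfolding S_def by blast
    then show "s \<le> C" using C(2)[of u] by simp
  qed
  have le: "N u u \<le> \<mu> * (norm u)\<^sup>2" if "u \<in> W" for u
  proof (cases "u = 0")
    case True then show ?thesis by (simp add: zeroL)
  next
    case False
    have "N u u / (norm u)\<^sup>2 \<le> \<mu>" unfolding \<mu>_def using inS[OF that False] Sbdd by (rule cSup_upper)
    then show ?thesis using False by (simp add: divide_le_eq mult.commute)
  qed
  have \<mu>pos: "\<mu> > 0"
  proof -
    have "N u0 u0 / (norm u0)\<^sup>2 \<le> \<mu>" unfolding \<mu>_def using inS[OF u0(1) u0nz] Sbdd by (rule cSup_upper)
    moreover have "N u0 u0 / (norm u0)\<^sup>2 > 0" using u0 u0nz by simp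
    ultimately show ?thesis by linarith
  qed
  have "\<forall>n::nat. \<exists>y. y \<in> W \<and> norm y = 1 \<and> N y y > \<mu> - 1/(real n + 1)"
  proof
    fix n :: nat
    have "\<mu> - 1/(real n+1) < Sup S" unfolding \<mu>_def[symmetric] by simp
    then obtain s where "s \<in> S" "\<mu> - 1/(real n+1) < s" using less_cSup_iff[OF Sne Sbdd] by blast
    then show "\<exists>y. y \<in> W \<and> norm y = 1 \<and> N y y > \<mu> - 1/(real n + 1)" unfolding S_def by auto
  qed
  then obtain y where y: "\<And>n. y n \<in> W" "\<And>n. norm (y n) = 1" "\<And>n. N (y n) (y n) > \<mu> - 1/(real n + 1)"
    by metis
  have yle: "N (y n) (y n) \<le> \<mu>" for n using le[OF y(1)] y(2) by simp
  have "bounded (range y)" using y(2) by (auto simp: bounded_iff)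
  from cpt[OF this] obtain r :: "nat \<Rightarrow> nat" where r: "strict_mono r"
    and Cr: "\<forall>e>0. \<exists>K. \<forall>m\<ge>K. \<forall>n\<ge>K. N (y (r m) - y (r n)) (y (r m) - y (r n)) < e"
    by (elim exE conjE) auto
  define z where "z = y \<circ> r"
  have zW: "z n \<in> W" and zn: "norm (z n) = 1" and zle: "N (z n) (z n) \<le> \<mu>" for n
    using y yle unfolding z_def by auto
  have zgt: "N (z n) (z n) > \<mu> - 1/(real n + 1)" for n
  proof -
    have "real n \<le> real (r n)" using seq_suble[OF r] by simp
    then have "1/(real (r n) + 1) \<le> 1/(real n + 1)" by (simp add: frac_le)
    then show ?thesis using y(3)[of "r n"] unfolding z_def by simp
  qed
  have para: "\<mu> * (norm (z m - z n))\<^sup>2 \<le> N (z m - z n) (z m - z n) + 2 * (\<mu> - N (z m) (z m)) + 2 * (\<mu> - N (z n) (z n))" for m n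
  proof -
    define a where "a = z m"
    define b where "b = z n"
    have a: "a \<in> W" "norm a = 1" and b: "b \<in> W" "norm b = 1" using zW zn a_def b_def by auto
    have "N (a + b) (a + b) \<le> \<mu> * (norm (a + b))\<^sup>2" using le subspace_add[OF W(1) a(1) b(1)] by blast
    moreover have "(norm (a - b))\<^sup>2 + (norm (a + b))\<^sup>2 = 4"
    proof -
      have "inner a a = 1" "inner b b = 1" using a b by (simp_all add: power2_norm_eq_inner[symmetric])
      then show ?thesis by (simp add: power2_norm_eq_inner inner_diff inner_add inner_commute algebra_simps)
    qed
    then have "\<mu> * (norm (a - b))\<^sup>2 + \<mu> * (norm (a + b))\<^sup>2 = 4 * \<mu>"
      by (simp add: distrib_left[symmetric])
    moreover have "N (a - b) (a - b) + N (a + b) (a + b) = 2 * N a a + 2 * N b b"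
      by (simp add: addL addR diffL diffR Nsym[of b a])
    ultimately have "\<mu> * (norm (a - b))\<^sup>2 \<le> N (a - b) (a - b) + 2 * (\<mu> - N a a) + 2 * (\<mu> - N b b)"
      by (smt (verit))
    then show ?thesis by (simp add: a_def b_def)
  qed
  have "Cauchy z"
    unfolding Cauchy_def
  proof (intro allI impI)
    fix e :: real assume e: "e > 0"
    define \<delta> where "\<delta> = \<mu> * e\<^sup>2 / 5"
    have \<delta>: "\<delta> > 0" unfolding \<delta>_def using \<mu>pos e by simp
    obtain K1 where K1: "\<forall>m\<ge>K1. \<forall>n\<ge>K1. N (z m - z n) (z m - z n) < \<delta>"
      using Cr \<delta> unfolding z_def by auto
    obtain K2 where K2: "inverse (real (Suc K2)) < \<delta> / 4" proof -
      have "\<delta> / 4 > 0" using \<delta> by simp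
      then show ?thesis using reals_Archimedean that by blast
    qed
    have small: "\<mu> - N (z m) (z m) < \<delta> / 4" if "m \<ge> K2" for m
    proof -
      have "1/(real m + 1) \<le> 1/(real K2 + 1)" using that by (simp add: frac_le)
      moreover have "1/(real K2 + 1) < \<delta> / 4" using K2 by (simp add: inverse_eq_divide add.commute)
      ultimately show ?thesis using zgt[of m] by linarith
    qed
    show "\<exists>M. \<forall>m\<ge>M. \<forall>n\<ge>M. dist (z m) (z n) < e"
    proof (intro exI[of _ "max K1 K2"] allI impI)
      fix m n assume mn: "max K1 K2 \<le> m" "max K1 K2 \<le> n"
      have mn': "m \<ge> K1" "n \<ge> K1" "m \<ge> K2" "n \<ge> K2" using mn by auto
      have "N (z m - z n) (z m - z n) < \<delta>" using K1 mn'(1,2) by blast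
      moreover have "\<mu> - N (z m) (z m) < \<delta> / 4" "\<mu> - N (z n) (z n) < \<delta> / 4"
        using small mn'(3,4) by auto
      ultimately have "\<mu> * (norm (z m - z n))\<^sup>2 < \<delta> + 2 * (\<delta>/4) + 2 * (\<delta>/4)"
        using para[of m n] by (smt (verit))
      also have "\<dots> < \<mu> * e\<^sup>2" unfolding \<delta>_def using \<mu>pos e by simp
      finally have "(norm (z m - z n))\<^sup>2 < e\<^sup>2" using \<mu>pos by simp
      then have "norm (z m - z n) < e" using e by (simp add: power_less_imp_less_base)
      then show "dist (z m) (z n) < e" by (simp add: dist_norm)
    qed
  qed
  then obtain x where zx: "z \<longlonglongrightarrow> x" using Cauchy_convergent_iff convergent_def by blast
  have xW: "x \<in> W" using closed_sequentially[OF W(2) zW zx] .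
  have "(\<lambda>n. norm (z n)) \<longlonglongrightarrow> norm x" using tendsto_norm[OF zx] .
  then have nx: "norm x = 1" using zn by (simp add: LIMSEQ_const_iff)
  have t1: "(\<lambda>n. N (z n) (z n)) \<longlonglongrightarrow> N x x" using bounded_bilinear.tendsto[OF bbil zx zx] .
  have "(\<lambda>n. 1 / real (Suc n)) \<longlonglongrightarrow> 0" using LIMSEQ_Suc[OF lim_1_over_n] .
  then have "(\<lambda>n. 1 / (real n + 1)) \<longlonglongrightarrow> 0" by (simp add: add.commute)
  then have "(\<lambda>n. \<mu> - 1 / (real n + 1)) \<longlonglongrightarrow> \<mu> - 0"
    by (intro tendsto_diff tendsto_const)
  then have lim: "(\<lambda>n. \<mu> - 1 / (real n + 1)) \<longlonglongrightarrow> \<mu>" by simp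
  have ev1: "\<forall>\<^sub>F n in sequentially. \<mu> - 1 / (real n + 1) \<le> N (z n) (z n)"
    by (intro always_eventually allI less_imp_le zgt)
  have ev2: "\<forall>\<^sub>F n in sequentially. N (z n) (z n) \<le> \<mu>"
    by (intro always_eventually allI zle)
  have t2: "(\<lambda>n. N (z n) (z n)) \<longlonglongrightarrow> \<mu>"
    using tendsto_sandwich[OF ev1 ev2 lim tendsto_const] .
  have Nx: "N x x = \<mu>" using LIMSEQ_unique[OF t1 t2] .
  have eig: "N x v = \<mu> * inner x v" if v: "v \<in> W" for v
  proof -
    have "\<And>t. t * (2 * \<mu> * inner x v - 2 * N x v) + t\<^sup>2 * (\<mu> * (norm v)\<^sup>2 - N v v) \<ge> 0"
    proof -
      fix t :: real
      have "N (x + t *\<^sub>R v) (x + t *\<^sub>R v) \<le> \<mu> * (norm (x + t *\<^sub>R v))\<^sup>2"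
        using le subspace_add[OF W(1) xW subspace_scale[OF W(1) v]] by blast
      moreover have "N (x + t *\<^sub>R v) (x + t *\<^sub>R v) = N x x + 2 * t * N x v + t\<^sup>2 * N v v"
        by (simp add: addL addR scaleL scaleR' Nsym[of v x] power2_eq_square algebra_simps)
      moreover have "(norm (x + t *\<^sub>R v))\<^sup>2 = 1 + 2 * t * inner x v + t\<^sup>2 * (norm v)\<^sup>2"
      proof -
        have "inner x x = 1" using nx by (simp add: power2_norm_eq_inner[symmetric])
        then show ?thesis
          by (simp only: power2_norm_eq_inner inner_add_left inner_add_right inner_scaleR_left inner_scaleR_right inner_commute[of v x])
             (simp add: power2_eq_square algebra_simps)
      qed
      ultimately show "t * (2 * \<mu> * inner x v - 2 * N x v) + t\<^sup>2 * (\<mu> * (norm v)\<^sup>2 - N v v) \<ge> 0"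
        using Nx by (simp add: algebra_simps)
    qed
    from quad_zero[OF this] show ?thesis by simp
  qed
  have "norm x = 1 \<and> N x x > 0 \<and> (\<forall>u\<in>W. N u u \<le> N x x * (norm u)\<^sup>2)
           \<and> (\<forall>v\<in>W. N x v = N x x * inner x v)"
    unfolding Nx using nx \<mu>pos le eig by blast
  then show ?thesis using xW by blast
qed

end



lemma exists_orth:
  fixes B :: "'a::real_inner set" and x :: "nat \<Rightarrow> 'a"
  assumes ind: "independent B" and fin: "finite B" and cB: "card B = k" and mk: "m < k"
  shows "\<exists>u\<in>span B. u \<noteq> 0 \<and> (\<forall>i<m. inner u (x i) = 0)"
proof -
  define f where "f v = (\<Sum>i<m. inner v (x i) *\<^sub>R x i)" for v
  have lin: "linear f" unfolding f_def
    by (intro linearI) (simp_all add: inner_add_left scaleR_add_left sum.distrib scaleR_sum_right)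
  have "\<not> inj_on f (span B)"
  proof
    assume inj: "inj_on f (span B)"
    have ind': "independent (f ` B)" using linear_independent_injective_image[OF lin ind inj] .
    have card: "card (f ` B) = k" using card_image[OF inj_on_subset[OF inj span_superset]] cB by simp
    have sub: "f ` B \<subseteq> span (x ` {..<m})"
    proof
      fix y assume "y \<in> f ` B"
      then obtain v where "y = f v" by blast
      moreover have "f v \<in> span (x ` {..<m})" unfolding f_def
        by (rule span_sum, rule span_scale, rule span_base) auto
      ultimately show "y \<in> span (x ` {..<m})" by simp
    qed
    have "card (f ` B) \<le> card (x ` {..<m})"
      using independent_span_bound[OF finite_imageI[OF finite_lessThan] ind' sub] by simp
    also have "\<dots> \<le> m" using card_image_le[OF finite_lessThan, of x m] by simp
    finally show False using card mk by simp
  qed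
  then obtain v w where vw: "v \<in> span B" "w \<in> span B" "v \<noteq> w" "f v = f w"
    unfolding inj_on_def by blast
  define u where "u = v - w"
  have u: "u \<in> span B" "u \<noteq> 0" using vw span_diff unfolding u_def by auto
  have fu: "f u = 0" unfolding u_def using linear_diff[OF lin] vw(4) by simp
  have "inner u (f u) = (\<Sum>i<m. (inner u (x i))\<^sup>2)"
    unfolding f_def by (simp add: inner_sum_right power2_eq_square)
  then have "(\<Sum>i<m. (inner u (x i))\<^sup>2) = 0" using fu by simp
  then have "\<forall>i\<in>{..<m}. (inner u (x i))\<^sup>2 = 0"
    using sum_nonneg_eq_0_iff[of "{..<m}" "\<lambda>i. (inner u (x i))\<^sup>2"] by simp
  then show ?thesis using u by (intro bexI[of _ u]) auto
qed

lemma kerperp_subspace: "subspace (W::'a::real_inner set) \<Longrightarrow> subspace (kerperp N W)"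
  unfolding subspace_def kerperp_def by (auto simp: inner_add_left)

lemma kerperp_sub: "kerperp N W \<subseteq> W" unfolding kerperp_def by auto




definition good :: "('a::real_inner \<Rightarrow> 'a \<Rightarrow> real) \<Rightarrow> 'a set \<Rightarrow> (nat \<Rightarrow> 'a) \<Rightarrow> (nat \<Rightarrow> real) \<Rightarrow> nat \<Rightarrow> bool" where
  "good N W x \<mu> j \<longleftrightarrow> x j \<in> W \<and> norm (x j) = 1 \<and> \<mu> j > 0 \<and> (\<forall>i<j. inner (x j) (x i) = 0) \<and>
     (\<forall>v\<in>W. N (x j) v = \<mu> j * inner (x j) v) \<and>
     (\<forall>u\<in>W. (\<forall>i<j. inner u (x i) = 0) \<longrightarrow> N u u \<le> \<mu> j * (norm u)\<^sup>2)"

lemma good_upd: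
  assumes "j < m"
  shows "good N W (x(m := a)) (\<mu>(m := c)) j = good N W x \<mu> j"
proof -
  have "\<forall>i<j. (x(m := a)) i = x i" using assms by auto
  moreover have "(x(m := a)) j = x j" "(\<mu>(m := c)) j = \<mu> j" using assms by auto
  ultimately show ?thesis unfolding good_def by simp
qed

context Nform begin

lemma construct_step:
  assumes W: "subspace W" "closed W" and dg: "dim_ge (kerperp N W) k"
  shows "m \<le> k \<Longrightarrow> \<exists>x \<mu>. \<forall>j<m. good N W x \<mu> j"
proof (induction m)
  case 0 then show ?case by auto
next
  case (Suc m)
  then have mk: "m < k" by simp
  from Suc obtain x \<mu> where H: "\<And>j. j<m \<Longrightarrow> good N W x \<mu> j" by auto
  have hW: "j<m \<Longrightarrow> x j \<in> W" and hn: "j<m \<Longrightarrow> norm (x j) = 1" and hpos: "j<m \<Longrightarrow> \<mu> j > 0"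
    and hort: "i<j \<Longrightarrow> j<m \<Longrightarrow> inner (x j) (x i) = 0"
    and heig: "j<m \<Longrightarrow> v\<in>W \<Longrightarrow> N (x j) v = \<mu> j * inner (x j) v" for i j v
    using H unfolding good_def by auto
  have orth: "inner (x i) (x l) = (if i = l then 1 else 0)" if "i<m" "l<m" for i l
  proof (cases "i = l")
    case True then show ?thesis using hn[OF that(2)] by (simp add: dot_square_norm)
  next
    case False
    then have "i < l \<or> l < i" by auto
    then show ?thesis using hort[of i l] hort[of l i] that False by (auto simp: inner_commute)
  qed
  obtain B where B: "B \<subseteq> kerperp N W" "finite B" "card B = k" "independent B"
    using dg unfolding dim_ge_def by blast
  obtain u where u: "u \<in> span B" "u \<noteq> 0" "\<forall>i<m. inner u (x i) = 0"
    using exists_orth[OF B(4) B(2) B(3) mk] by blast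
  have uK: "u \<in> kerperp N W" using span_minimal[OF B(1) kerperp_subspace[OF W(1)]] u(1) by blast
  have uW: "u \<in> W" using uK kerperp_sub by blast
  have Nu: "N u u > 0"
  proof (rule ccontr)
    assume "\<not> N u u > 0" then have "N u u = 0" using psd[of u] by simp
    then have "u \<in> kerN N W" using uW unfolding kerN_def by simp
    then have "inner u u = 0" using uK unfolding kerperp_def by blast
    then show False using u(2) by simp
  qed
  define W' where "W' = {w \<in> W. \<forall>i<m. inner w (x i) = 0}"
  have W'sub: "subspace W'" unfolding W'_def subspace_def
    using W(1) by (auto simp: subspace_0 subspace_add subspace_scale inner_add_left)
  have W'cl: "closed W'"
  proof -
    have "W' = W \<inter> (\<Inter>i\<in>{..<m}. {w. inner (x i) w = 0})" unfolding W'_def by (auto simp: inner_commute)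
    moreover have "closed (\<Inter>i\<in>{..<m}. {w. inner (x i) w = 0})" by (auto intro!: closed_INT closed_hyperplane)
    ultimately show ?thesis using W(2) by (simp add: closed_Int)
  qed
  have uW': "u \<in> W'" using uW u(3) W'_def by simp
  obtain xm where xm: "xm \<in> W'" "norm xm = 1" "N xm xm > 0"
    "\<forall>w\<in>W'. N w w \<le> N xm xm * (norm w)\<^sup>2" "\<forall>v\<in>W'. N xm v = N xm xm * inner xm v"
    using max_exists[OF W'sub W'cl uW' Nu] by blast
  have xmW: "xm \<in> W" and xmo: "\<And>i. i<m \<Longrightarrow> inner xm (x i) = 0" using xm(1) W'_def by auto
  have eigm: "N xm v = N xm xm * inner xm v" if v: "v \<in> W" for v
  proof -
    define c where "c i = inner v (x i)" for i
    define w where "w = v - (\<Sum>i<m. c i *\<^sub>R x i)"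
    have "(\<Sum>i<m. c i *\<^sub>R x i) \<in> W" by (rule subspace_sum[OF W(1)]) (simp add: subspace_scale[OF W(1)] hW)
    then have wW: "w \<in> W" unfolding w_def using subspace_diff[OF W(1) v] by blast
    have "inner w (x l) = 0" if l: "l<m" for l
    proof -
      have "inner w (x l) = c l - (\<Sum>i<m. c i * inner (x i) (x l))"
        unfolding w_def c_def by (simp add: inner_diff_left inner_sum_left)
      also have "(\<Sum>i<m. c i * inner (x i) (x l)) = (\<Sum>i<m. if i = l then c i else 0)"
        using orth l by (intro sum.cong) auto
      also have "\<dots> = c l" using l by simp
      finally show ?thesis by simp
    qed
    then have wW': "w \<in> W'" using wW W'_def by simp
    have z: "N xm (x i) = 0" if "i<m" for i
      using Nsym[of xm "x i"] heig[OF that xmW] xmo[OF that] by (simp add: inner_commute)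
    have "N xm w = N xm v - (\<Sum>i<m. c i * N xm (x i))" unfolding w_def by (simp add: diffR sumR scaleR')
    also have "\<dots> = N xm v" using z by simp
    finally have e1: "N xm w = N xm v" .
    have "inner xm w = inner xm v - (\<Sum>i<m. c i * inner xm (x i))"
      unfolding w_def by (simp add: inner_diff_right inner_sum_right)
    also have "\<dots> = inner xm v" using xmo by simp
    finally have e2: "inner xm w = inner xm v" .
    show ?thesis using xm(5) wW' e1 e2 by metis
  qed
  define x' where "x' = x(m := xm)"
  define \<mu>' where "\<mu>' = \<mu>(m := N xm xm)"
  have "good N W x' \<mu>' j" if "j < Suc m" for j
  proof (cases "j < m")
    case True then show ?thesis unfolding x'_def \<mu>'_def good_upd[OF True] using H[OF True] by simp
  next
    case False then have j: "j = m" using that by simp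
    have xi: "\<forall>i<m. x' i = x i" unfolding x'_def by auto
    have x'm: "x' m = xm" and mu'm: "\<mu>' m = N xm xm" unfolding x'_def \<mu>'_def by auto
    have a1: "\<forall>u\<in>W. (\<forall>i<m. inner u (x' i) = 0) \<longrightarrow> N u u \<le> N xm xm * (norm u)\<^sup>2"
      using xm(4) xi unfolding W'_def by auto
    have a2: "\<forall>i<m. inner xm (x' i) = 0" using xi xmo by simp
    have a3: "\<forall>v\<in>W. N xm v = N xm xm * inner xm v" using eigm by blast
    show ?thesis unfolding good_def j x'm mu'm using a1 a2 a3 xmW xm(2) xm(3) by blast
  qed
  then show ?case by blast
qed

lemma construct:
  assumes "subspace W" "closed W" "dim_ge (kerperp N W) k"
  shows "\<exists>x \<mu>. \<forall>j<k. good N W x \<mu> j"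
  using construct_step[OF assms, of k] by simp

lemma good_eigpair:
  assumes "good N W x \<mu> j"
  shows "eigpair N W (1 / \<mu> j) (x j)"
proof -
  have g: "x j \<in> W" "norm (x j) = 1" "\<mu> j > 0" "\<forall>v\<in>W. N (x j) v = \<mu> j * inner (x j) v"
    using assms unfolding good_def by auto
  have "inner (x j) v = 0" if "v \<in> kerN N W" for v
  proof -
    have "v \<in> W" "N v v = 0" using that unfolding kerN_def by auto
    then have "N (x j) v = 0" using N_zero_right by blast
    then show ?thesis using g(3,4) \<open>v \<in> W\<close> by simp
  qed
  then have K: "x j \<in> kerperp N W" using g(1) unfolding kerperp_def by auto
  have "inner (x j) v = 1 / \<mu> j * N (x j) v" if "v \<in> kerperp N W" for v
    using g(3,4) that kerperp_sub by fastforce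
  then show ?thesis unfolding eigpair_def using K g(2) by auto
qed

end

lemma good_family:
  assumes "\<forall>j<k. good N W x \<mu> j"
  shows "inj_on x {..<k} \<and> independent (x ` {..<k}) \<and> card (x ` {..<k}) = k"
proof -
  have n: "j<k \<Longrightarrow> norm (x j) = 1" and o: "i<j \<Longrightarrow> j<k \<Longrightarrow> inner (x j) (x i) = 0" for i j
    using assms unfolding good_def by auto
  have o2: "inner (x i) (x j) = 0" if "i<k" "j<k" "i \<noteq> j" for i j
  proof -
    have "i < j \<or> j < i" using that by auto
    then show ?thesis using o[of i j] o[of j i] that by (auto simp: inner_commute)
  qed
  have inj: "inj_on x {..<k}"
  proof (rule inj_onI)
    fix i j assume ij: "i \<in> {..<k}" "j \<in> {..<k}" "x i = x j"
    show "i = j"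
    proof (rule ccontr)
      assume "i \<noteq> j"
      then have "inner (x i) (x j) = 0" using ij(1,2) by (intro o2) auto
      then have "inner (x i) (x i) = 0" using ij(3) by metis
      then show False using n[of i] ij(1) by simp
    qed
  qed
  have "pairwise orthogonal (x ` {..<k})"
    unfolding pairwise_def orthogonal_def using o2 by auto
  moreover have "0 \<notin> x ` {..<k}" using n by force
  ultimately have "independent (x ` {..<k})" by (rule pairwise_orthogonal_independent)
  then show ?thesis using inj card_image[OF inj] by simp
qed




lemma alg:
  fixes A b p c lam :: real
  assumes lam: "lam > 0" and t: "c\<^sup>2 * lam < 1" and h0: "A + b\<^sup>2 \<le> lam * (p + c*b)\<^sup>2"
  shows "(1 - c\<^sup>2*lam) * A \<le> lam * p\<^sup>2"
proof -
  define t where "t = c\<^sup>2 * lam"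
  have t1: "1 - t > 0" using t t_def by simp
  have h: "0 \<le> (lam*c*p - (1 - t)*b)\<^sup>2" by simp
  have m: "(1 - t) * (A + b\<^sup>2) \<le> (1 - t) * (lam * (p + c*b)\<^sup>2)"
    using h0 t1 by (simp add: mult_left_mono)
  have E: "(1 - t) * (lam * (p + c*b)\<^sup>2) - (1 - t) * b\<^sup>2 + (lam*c*p - (1 - t)*b)\<^sup>2 = lam * p\<^sup>2"
    unfolding t_def by (simp add: power2_eq_square algebra_simps)
  have "(1 - t) * A = (1 - t) * (A + b\<^sup>2) - (1 - t) * b\<^sup>2" by (simp add: algebra_simps)
  then show ?thesis using m h E unfolding t_def[symmetric] by linarith
qed

lemma alg0:
  fixes b c lam :: real
  assumes lam: "lam > 0" and t: "c\<^sup>2 * lam < 1" and h0: "b\<^sup>2 \<le> lam * (c*b)\<^sup>2"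
  shows "b = 0"
proof -
  have "lam * (c*b)\<^sup>2 = (c\<^sup>2 * lam) * b\<^sup>2" by (simp add: power2_eq_square algebra_simps)
  then have "(1 - c\<^sup>2 * lam) * b\<^sup>2 \<le> 0" using h0 by (simp add: algebra_simps)
  moreover have "1 - c\<^sup>2 * lam > 0" using t by simp
  ultimately have "b\<^sup>2 \<le> 0" by (simp add: mult_le_0_iff)
  then show ?thesis by simp
qed

context Nform begin

lemma key_ineq:
  assumes lam: "lam > 0" and t: "Ch\<^sup>2 * lam < 1" and Ch: "Ch \<ge> 0"
    and ray: "inner u u \<le> lam * N u u"
    and ap: "sqrt (N (u - v) (u - v)) \<le> Ch * norm (u - v)"
    and orth: "inner (u - v) v = 0"
  shows "(1 - Ch\<^sup>2 * lam) * inner v v \<le> lam * N v v" and "v = 0 \<Longrightarrow> u = 0"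
proof -
  define b where "b = norm (u - v)"
  define p where "p = sqrt (N v v)"
  have uu: "inner u u = inner v v + b\<^sup>2"
  proof -
    have "inner u u = inner ((u - v) + v) ((u - v) + v)" by simp
    also have "\<dots> = inner (u - v) (u - v) + 2 * inner (u - v) v + inner v v"
      by (simp only: inner_add_left inner_add_right inner_commute[of v "u - v"] mult_2 add.assoc)
    finally show ?thesis using orth unfolding b_def by (simp add: power2_norm_eq_inner)
  qed
  have "sqrt (N u u) \<le> p + sqrt (N (u - v) (u - v))"
    using tri[of v "u - v"] unfolding p_def by simp
  also have "\<dots> \<le> p + Ch * b" using ap b_def by simp
  finally have s: "sqrt (N u u) \<le> p + Ch * b" .
  have "N u u \<le> (p + Ch * b)\<^sup>2"
  proof -
    have "N u u = (sqrt (N u u))\<^sup>2" using psd[of u] by simp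
    also have "\<dots> \<le> (p + Ch * b)\<^sup>2" using s psd[of u] by (intro power_mono) auto
    finally show ?thesis .
  qed
  then have h0: "inner v v + b\<^sup>2 \<le> lam * (p + Ch * b)\<^sup>2"
    using ray uu lam by (smt (verit) mult_left_mono)
  have pp: "p\<^sup>2 = N v v" unfolding p_def using psd[of v] by simp
  show "(1 - Ch\<^sup>2 * lam) * inner v v \<le> lam * N v v"
    using alg[OF lam t h0] pp by simp
  show "u = 0" if v0: "v = 0"
  proof -
    have "p = 0" unfolding p_def v0 by (simp add: zeroL)
    then have "b\<^sup>2 \<le> lam * (Ch * b)\<^sup>2" using h0 v0 by simp
    then have "b = 0" using alg0[OF lam t] by blast
    then show ?thesis using v0 b_def by simp
  qed
qed

lemma rayleigh:
  assumes W: "subspace W" and v: "v \<in> span {u. \<exists>mu\<le>lam. eigpair N W mu u}"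
  shows "inner v v \<le> lam * N v v"
proof -
  let ?E = "{u. \<exists>mu\<le>lam. eigpair N W mu u}"
  from v obtain T c where T: "finite T" "T \<subseteq> ?E" and vsum: "v = (\<Sum>y\<in>T. c y *\<^sub>R y)"
    unfolding span_explicit by blast
  define mu where "mu y = inner y y / N y y" for y
  have eig: "eigpair N W (mu y) y \<and> mu y \<le> lam" if y: "y \<in> T" for y
  proof -
    obtain m where m: "m \<le> lam" "eigpair N W m y" using T(2) y by blast
    have yK: "y \<in> kerperp N W" "y \<noteq> 0" and ev: "\<forall>w\<in>kerperp N W. inner y w = m * N y w"
      using m(2) unfolding eigpair_def by auto
    have "inner y y = m * N y y" using ev yK by blast
    moreover have "inner y y > 0" using yK by simp
    ultimately have "N y y \<noteq> 0" by auto
    then have "m = mu y" unfolding mu_def using \<open>inner y y = m * N y y\<close> by simp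
    then show ?thesis using m by simp
  qed
  have TK: "T \<subseteq> kerperp N W" using eig unfolding eigpair_def by blast
  have vK: "v \<in> kerperp N W" unfolding vsum
    by (rule subspace_sum[OF kerperp_subspace[OF W]]) (use TK in \<open>auto intro: subspace_scale[OF kerperp_subspace[OF W]]\<close>)
  have ev: "inner y w = mu y * N y w" if "y \<in> T" "w \<in> kerperp N W" for y w
    using eig[OF that(1)] that(2) unfolding eigpair_def by blast
  have cross: "N y y' = 0" if "y \<in> T" "y' \<in> T" "mu y \<noteq> mu y'" for y y'
  proof -
    have e1: "inner y y' = mu y * N y y'" using ev that TK by blast
    have e2: "inner y' y = mu y' * N y' y" using ev that TK by blast
    have "mu y * N y y' = inner y y'" using e1 by simp
    also have "\<dots> = inner y' y" by (rule inner_commute)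
    also have "\<dots> = mu y' * N y' y" by (rule e2)
    also have "\<dots> = mu y' * N y y'" using Nsym[of y' y] by simp
    finally have "mu y * N y y' = mu y' * N y y'" .
    then have "(mu y - mu y') * N y y' = 0" by (simp add: algebra_simps)
    then show ?thesis using that(3) by simp
  qed
  define s where "s y = sqrt (lam - mu y)" for y
  have key: "(lam - mu y) * N y y' = s y * s y' * N y y'" if "y \<in> T" "y' \<in> T" for y y'
  proof (cases "mu y = mu y'")
    case True
    have "lam - mu y \<ge> 0" using eig[OF that(1)] by simp
    then have "s y * s y' = lam - mu y" unfolding s_def True[symmetric] by simp
    then show ?thesis by simp
  next
    case False then show ?thesis using cross[OF that] by simp
  qed
  define z where "z = (\<Sum>y\<in>T. (c y * s y) *\<^sub>R y)"
  have g1: "inner v w = (\<Sum>y\<in>T. c y * inner y w)" for w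
    unfolding vsum by (simp add: inner_sum_left)
  have g2: "N y v = (\<Sum>y'\<in>T. c y' * N y y')" for y
    unfolding vsum by (simp add: sumR scaleR')
  have g3: "N v w = (\<Sum>y\<in>T. c y * N y w)" for w
    unfolding vsum by (simp add: sumL scaleL)
  have g4: "N z w = (\<Sum>y\<in>T. (c y * s y) * N y w)" for w
    unfolding z_def by (simp add: sumL scaleL)
  have g5: "N y z = (\<Sum>y'\<in>T. (c y' * s y') * N y y')" for y
    unfolding z_def by (simp add: sumR scaleR')
  have I: "inner v v = (\<Sum>y\<in>T. \<Sum>y'\<in>T. c y * c y' * (mu y * N y y'))"
  proof -
    have "inner v v = (\<Sum>y\<in>T. c y * inner y v)" by (rule g1)
    also have "\<dots> = (\<Sum>y\<in>T. c y * (mu y * (\<Sum>y'\<in>T. c y' * N y y')))"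
      using ev vK g2 by (intro sum.cong) auto
    also have "\<dots> = (\<Sum>y\<in>T. \<Sum>y'\<in>T. c y * c y' * (mu y * N y y'))"
      by (simp add: sum_distrib_left algebra_simps)
    finally show ?thesis .
  qed
  have L: "lam * N v v = (\<Sum>y\<in>T. \<Sum>y'\<in>T. c y * c y' * (lam * N y y'))"
  proof -
    have "lam * N v v = lam * (\<Sum>y\<in>T. c y * N y v)" by (simp only: g3[of v])
    also have "\<dots> = lam * (\<Sum>y\<in>T. c y * (\<Sum>y'\<in>T. c y' * N y y'))" by (simp only: g2)
    also have "\<dots> = (\<Sum>y\<in>T. \<Sum>y'\<in>T. c y * c y' * (lam * N y y'))"
      by (simp add: sum_distrib_left algebra_simps)
    finally show ?thesis .
  qed
  have Z: "N z z = (\<Sum>y\<in>T. \<Sum>y'\<in>T. c y * c y' * (s y * s y' * N y y'))"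
  proof -
    have "N z z = (\<Sum>y\<in>T. (c y * s y) * N y z)" by (simp only: g4[of z])
    also have "\<dots> = (\<Sum>y\<in>T. (c y * s y) * (\<Sum>y'\<in>T. (c y' * s y') * N y y'))" by (simp only: g5)
    also have "\<dots> = (\<Sum>y\<in>T. \<Sum>y'\<in>T. c y * c y' * (s y * s y' * N y y'))"
      by (simp add: sum_distrib_left algebra_simps)
    finally show ?thesis .
  qed
  have "lam * N v v - inner v v = (\<Sum>y\<in>T. \<Sum>y'\<in>T. c y * c y' * ((lam - mu y) * N y y'))"
    unfolding L I by (simp add: sum_subtractf[symmetric] algebra_simps)
  also have "\<dots> = N z z" unfolding Z using key by (intro sum.cong refl) auto
  finally show ?thesis using psd[of z] by simp
qed

lemma S_pos:
  assumes "dim_ge (span {u. \<exists>mu\<le>lam. eigpair N W mu u}) k" "1 \<le> k"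
  shows "lam > 0"
proof -
  let ?E = "{u. \<exists>mu\<le>lam. eigpair N W mu u}"
  obtain B where B: "B \<subseteq> span ?E" "finite B" "card B = k" "independent B"
    using assms(1) unfolding dim_ge_def by blast
  have "B \<noteq> {}" using B(3) assms(2) by auto
  then obtain b where b: "b \<in> B" by blast
  have "b \<noteq> 0" using B(4) b dependent_zero by blast
  have "?E \<noteq> {}"
  proof
    assume e: "?E = {}"
    have "b \<in> span ?E" using B(1) b by blast
    then have "b \<in> span {}" unfolding e .
    then show False using \<open>b \<noteq> 0\<close> by simp
  qed
  then obtain mu u where mu: "mu \<le> lam" "eigpair N W mu u" by blast
  have uK: "u \<in> kerperp N W" "u \<noteq> 0" and ev: "inner u u = mu * N u u"
    using mu(2) unfolding eigpair_def by auto
  have "inner u u > 0" using uK by simp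
  then have "mu > 0" using ev psd[of u] by (metis mult_nonpos_nonneg not_le)
  then show ?thesis using mu(1) by simp
qed

lemma S_nonempty:
  assumes "subspace W" "closed W" "dim_ge (kerperp N W) k"
  shows "\<exists>lam. dim_ge (span {u. \<exists>mu\<le>lam. eigpair N W mu u}) k"
proof -
  obtain x \<mu> where g: "\<forall>j<k. good N W x \<mu> j" using construct[OF assms] by blast
  define lam where "lam = (\<Sum>j<k. 1 / \<mu> j)"
  have pos: "j < k \<Longrightarrow> \<mu> j > 0" for j using g unfolding good_def by auto
  have le: "1 / \<mu> j \<le> lam" if "j < k" for j
    unfolding lam_def using that by (intro member_le_sum) (auto intro!: less_imp_le pos)
  have "x j \<in> {u. \<exists>mu\<le>lam. eigpair N W mu u}" if "j < k" for j
    using good_eigpair[of W x \<mu> j] g le[OF that] that by blast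
  then have "x ` {..<k} \<subseteq> span {u. \<exists>mu\<le>lam. eigpair N W mu u}"
    by (auto intro!: span_base)
  then have "dim_ge (span {u. \<exists>mu\<le>lam. eigpair N W mu u}) k"
    unfolding dim_ge_def using good_family[OF g] by blast
  then show ?thesis by blast
qed

lemma minmax:
  assumes W: "subspace W" "closed W" "dim_ge (kerperp N W) k"
    and B: "B \<subseteq> W" "finite B" "card B = k" "independent B"
    and G: "\<forall>v\<in>span B. inner v v \<le> G * N v v"
  shows "dim_ge (span {u. \<exists>mu\<le>G. eigpair N W mu u}) k"
proof -
  obtain x \<mu> where g: "\<forall>j<k. good N W x \<mu> j" using construct[OF W] by blast
  have le: "1 / \<mu> j \<le> G" if j: "j < k" for j
  proof -
    have gj: "\<mu> j > 0" "\<forall>u\<in>W. (\<forall>i<j. inner u (x i) = 0) \<longrightarrow> N u u \<le> \<mu> j * (norm u)\<^sup>2"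
      using g j unfolding good_def by auto
    obtain u where u: "u \<in> span B" "u \<noteq> 0" "\<forall>i<j. inner u (x i) = 0"
      using exists_orth[OF B(4) B(2) B(3) j] by blast
    have uW: "u \<in> W" using span_minimal[OF B(1) W(1)] u(1) by blast
    have A1: "N u u \<le> \<mu> j * (norm u)\<^sup>2" using gj(2) uW u(3) by blast
    have A2: "(norm u)\<^sup>2 \<le> G * N u u" using G u(1) by (simp add: power2_norm_eq_inner)
    have A3: "(norm u)\<^sup>2 > 0" using u(2) by simp
    have Gp: "G > 0"
    proof (rule ccontr)
      assume "\<not> G > 0"
      then have "G * N u u \<le> 0" using psd[of u] by (simp add: mult_nonpos_nonneg)
      then show False using A2 A3 by linarith
    qed
    have "G * N u u \<le> G * (\<mu> j * (norm u)\<^sup>2)" using A1 Gp by (simp add: mult_left_mono)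
    then have "(norm u)\<^sup>2 \<le> G * (\<mu> j * (norm u)\<^sup>2)" using A2 by linarith
    then have "1 \<le> G * \<mu> j" using \<open>(norm u)\<^sup>2 > 0\<close> by (simp add: mult.assoc[symmetric])
    then show ?thesis using gj(1) by (simp add: divide_le_eq mult.commute)
  qed
  have "x j \<in> {u. \<exists>mu\<le>G. eigpair N W mu u}" if "j < k" for j
    using good_eigpair[of W x \<mu> j] g le[OF that] that by blast
  then have "x ` {..<k} \<subseteq> span {u. \<exists>mu\<le>G. eigpair N W mu u}"
    by (auto intro!: span_base)
  then show ?thesis
    unfolding dim_ge_def using good_family[OF g] by blast
qed

end



lemma Ph_linear:
  fixes Ph :: "'a::real_inner \<Rightarrow> 'a"
  assumes Vh: "subspace Vh" and P: "\<forall>u. Ph u \<in> Vh \<and> (\<forall>v \<in> Vh. inner (u - Ph u) v = 0)"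
  shows "linear Ph"
proof -
  have uniq: "d = 0" if "d \<in> Vh" "\<forall>v\<in>Vh. inner d v = 0" for d
    using that by auto
  have o: "inner (u - Ph u) v = 0" if "v \<in> Vh" for u v using P that by blast
  show ?thesis
  proof (rule linearI)
    fix a b
    let ?d = "Ph (a + b) - Ph a - Ph b"
    have dV: "?d \<in> Vh" using P Vh by (auto intro!: subspace_diff)
    have deq: "?d = (a - Ph a) + (b - Ph b) - ((a + b) - Ph (a + b))" by (simp add: algebra_simps)
    have "\<forall>v\<in>Vh. inner ?d v = 0"
    proof
      fix v assume v: "v \<in> Vh"
      have "inner ?d v = inner ((a - Ph a) + (b - Ph b)) v - inner ((a + b) - Ph (a + b)) v"
        unfolding deq by (rule inner_diff_left)
      also have "\<dots> = inner (a - Ph a) v + inner (b - Ph b) v - inner ((a + b) - Ph (a + b)) v"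
        by (simp only: inner_add_left[of "a - Ph a"])
      also have "\<dots> = 0" using o[OF v, of a] o[OF v, of b] o[OF v, of "a + b"] by linarith
      finally show "inner ?d v = 0" .
    qed
    then have "?d = 0" using uniq dV by blast
    then show "Ph (a + b) = Ph a + Ph b" by (simp add: algebra_simps)
  next
    fix r a
    let ?d = "Ph (r *\<^sub>R a) - r *\<^sub>R Ph a"
    have dV: "?d \<in> Vh" using P Vh by (auto intro!: subspace_diff subspace_scale)
    have deq: "?d = r *\<^sub>R (a - Ph a) - (r *\<^sub>R a - Ph (r *\<^sub>R a))" by (simp add: algebra_simps)
    have "\<forall>v\<in>Vh. inner ?d v = 0"
    proof
      fix v assume v: "v \<in> Vh"
      have "inner ?d v = inner (r *\<^sub>R (a - Ph a)) v - inner (r *\<^sub>R a - Ph (r *\<^sub>R a)) v"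
        unfolding deq by (rule inner_diff_left)
      also have "\<dots> = r * inner (a - Ph a) v - inner (r *\<^sub>R a - Ph (r *\<^sub>R a)) v"
        by (simp only: inner_scaleR_left)
      also have "\<dots> = 0" using o[OF v, of a] o[OF v, of "r *\<^sub>R a"] by simp
      finally show "inner ?d v = 0" .
    qed
    then have "?d = 0" using uniq dV by blast
    then show "Ph (r *\<^sub>R a) = r *\<^sub>R Ph a" by simp
  qed
qed

lemma frac_mono:
  fixes a b c :: real
  assumes "0 \<le> a" "a \<le> b" "c > 0"
  shows "a / (1 + c * a) \<le> b / (1 + c * b)"
proof -
  have p1: "1 + c * a > 0" "1 + c * b > 0" using assms by (auto intro: add_pos_nonneg)
  have "a * (1 + c * b) \<le> b * (1 + c * a)" using assms by (simp add: algebra_simps)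
  then show ?thesis using p1 by (simp add: divide_le_eq le_divide_eq field_simps)
qed

theorem theorem2p4:
  fixes N :: "'a::{real_inner, complete_space} \<Rightarrow> 'a \<Rightarrow> real"
    and V Vh :: "'a set" and Ph :: "'a \<Rightarrow> 'a" and Ch :: real and k :: nat
  assumes N_bilinear: "bilinear N"
    and N_sym: "\<forall>u v. N u v = N v u"
    and N_psd: "\<forall>u. N u u \<ge> 0"
    and N_compact: "\<forall>x :: nat \<Rightarrow> 'a. bounded (range x) \<longrightarrow>
          (\<exists>r :: nat \<Rightarrow> nat. strict_mono r \<and> (\<forall>e>0. \<exists>K. \<forall>m\<ge>K. \<forall>n\<ge>K.
               seminormN N (x (r m) - x (r n)) < e))"
    and V_sub: "subspace V" and V_closed: "closed V"
    and Vh_sub: "subspace Vh" and Vh_closed: "closed Vh"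
    and Vh_fin: "\<exists>B. finite B \<and> Vh = span B"
    and Ph_proj: "\<forall>u. Ph u \<in> Vh \<and> (\<forall>v \<in> Vh. inner (u - Ph u) v = 0)"
    and Ch_pos: "Ch > 0"
    and approx: "\<forall>u \<in> V. seminormN N (u - Ph u) \<le> Ch * norm (u - Ph u)"
    and k_pos: "1 \<le> k"
    and k_le_n: "dim_ge (kerperp N Vh) k"
    and k_le_d: "dim_ge (kerperp N V) k"
  shows "eigval N V k \<ge> eigval N Vh k / (1 + Ch\<^sup>2 * eigval N Vh k)"
proof -
  have cpt: "\<exists>r :: nat \<Rightarrow> nat. strict_mono r \<and> (\<forall>e>0. \<exists>K. \<forall>m\<ge>K. \<forall>n\<ge>K.
               N (x (r m) - x (r n)) (x (r m) - x (r n)) < e)"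
    if bx: "bounded (range (x :: nat \<Rightarrow> 'a))" for x
  proof -
    obtain r :: "nat \<Rightarrow> nat" where r: "strict_mono r"
      "\<forall>e>0. \<exists>K. \<forall>m\<ge>K. \<forall>n\<ge>K. seminormN N (x (r m) - x (r n)) < e"
      using N_compact bx by blast
    have "\<forall>e>0. \<exists>K. \<forall>m\<ge>K. \<forall>n\<ge>K. N (x (r m) - x (r n)) (x (r m) - x (r n)) < e"
    proof (intro allI impI)
      fix e :: real assume e: "e > 0"
      then obtain K where K: "\<forall>m\<ge>K. \<forall>n\<ge>K. seminormN N (x (r m) - x (r n)) < sqrt e"
        using r(2) real_sqrt_gt_zero by blast
      show "\<exists>K. \<forall>m\<ge>K. \<forall>n\<ge>K. N (x (r m) - x (r n)) (x (r m) - x (r n)) < e"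
      proof (intro exI[of _ K] allI impI)
        fix m n assume "K \<le> m" "K \<le> n"
        then have "sqrt (N (x (r m) - x (r n)) (x (r m) - x (r n))) < sqrt e"
          using K unfolding seminormN_def by blast
        then show "N (x (r m) - x (r n)) (x (r m) - x (r n)) < e" by simp
      qed
    qed
    then show ?thesis using r(1) by blast
  qed
  have "Nform N"
    by (rule Nform.intro) (use N_bilinear N_sym N_psd cpt in auto)
  then interpret Nform N .
  define SV where "SV = {lam. dim_ge (span {u. \<exists>mu\<le>lam. eigpair N V mu u}) k}"
  define Sh where "Sh = {lam. dim_ge (span {u. \<exists>mu\<le>lam. eigpair N Vh mu u}) k}"
  have eV: "eigval N V k = Inf SV" unfolding eigval_def SV_def ..
  have eh: "eigval N Vh k = Inf Sh" unfolding eigval_def Sh_def ..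
  have SVne: "SV \<noteq> {}" using S_nonempty[OF V_sub V_closed k_le_d] unfolding SV_def by blast
  have Shne: "Sh \<noteq> {}" using S_nonempty[OF Vh_sub Vh_closed k_le_n] unfolding Sh_def by blast
  have posV: "lam > 0" if "lam \<in> SV" for lam using S_pos that k_pos unfolding SV_def by blast
  have posh: "lam > 0" if "lam \<in> Sh" for lam using S_pos that k_pos unfolding Sh_def by blast
  have bddh: "bdd_below Sh" using posh by (auto intro!: bdd_belowI[of _ 0] less_imp_le)
  define lh where "lh = Inf Sh"
  have lh0: "lh \<ge> 0" unfolding lh_def using Shne posh by (intro cInf_greatest) (auto intro: less_imp_le)
  have Ch2: "Ch\<^sup>2 > 0" using Ch_pos by simp
  have lin: "linear Ph" using Ph_linear[OF Vh_sub Ph_proj] .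
  have main: "lh / (1 + Ch\<^sup>2 * lh) \<le> lam" if lam: "lam \<in> SV" for lam
  proof (cases "1 \<le> Ch\<^sup>2 * lam")
    case True
    have d: "1 + Ch\<^sup>2 * lh > 0" using lh0 Ch2 by (simp add: add_pos_nonneg)
    have "lh / (1 + Ch\<^sup>2 * lh) \<le> 1 / Ch\<^sup>2"
      using d Ch2 by (simp add: divide_le_eq le_divide_eq field_simps)
    also have "\<dots> \<le> lam" using True Ch2 by (simp add: divide_le_eq mult.commute)
    finally show ?thesis .
  next
    case False
    then have t: "Ch\<^sup>2 * lam < 1" by simp
    have lp: "lam > 0" using posV lam by blast
    let ?E = "{u. \<exists>mu\<le>lam. eigpair N V mu u}"
    obtain B where B: "B \<subseteq> span ?E" "finite B" "card B = k" "independent B"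
      using lam unfolding SV_def dim_ge_def by blast
    define G where "G = lam / (1 - Ch\<^sup>2 * lam)"
    have t1: "1 - Ch\<^sup>2 * lam > 0" using t by simp
    have spB: "span B \<subseteq> span ?E" using span_minimal[OF B(1) subspace_span] .
    have EV: "?E \<subseteq> V" unfolding eigpair_def kerperp_def by auto
    have spEV: "span ?E \<subseteq> V" using span_minimal[OF EV V_sub] .
    have good: "inner (Ph u) (Ph u) \<le> G * N (Ph u) (Ph u) \<and> (Ph u = 0 \<longrightarrow> u = 0)"
      if u: "u \<in> span B" for u
    proof -
      have uE: "u \<in> span ?E" using u spB by blast
      have uV: "u \<in> V" using uE spEV by blast
      have ray: "inner u u \<le> lam * N u u" using rayleigh[OF V_sub uE] .
      have ap: "sqrt (N (u - Ph u) (u - Ph u)) \<le> Ch * norm (u - Ph u)"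
        using approx uV unfolding seminormN_def by blast
      have orth: "inner (u - Ph u) (Ph u) = 0" using Ph_proj by blast
      note K = key_ineq[OF lp t less_imp_le[OF Ch_pos] ray ap orth]
      have "inner (Ph u) (Ph u) \<le> lam * N (Ph u) (Ph u) / (1 - Ch\<^sup>2 * lam)"
        using K(1) t1 by (simp add: le_divide_eq mult.commute)
      also have "\<dots> = G * N (Ph u) (Ph u)" unfolding G_def by simp
      finally show ?thesis using K(2) by blast
    qed
    have inj: "inj_on Ph (span B)"
      unfolding linear_inj_on_iff_eq_0[OF lin subspace_span] using good by blast
    define B' where "B' = Ph ` B"
    have B'ind: "independent B'" unfolding B'_def using linear_independent_injective_image[OF lin B(4) inj] .
    have B'card: "card B' = k" unfolding B'_def using card_image[OF inj_on_subset[OF inj span_superset]] B(3) by simp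
    have B'fin: "finite B'" unfolding B'_def using B(2) by simp
    have B'sub: "B' \<subseteq> Vh" unfolding B'_def using Ph_proj by blast
    have B'G: "\<forall>v\<in>span B'. inner v v \<le> G * N v v"
      unfolding B'_def span_linear_image[OF lin] using good by blast
    have "G \<in> Sh" unfolding Sh_def using minmax[OF Vh_sub Vh_closed k_le_n B'sub B'fin B'card B'ind B'G] by simp
    then have "lh \<le> G" unfolding lh_def using bddh by (rule cInf_lower)
    then have "lh / (1 + Ch\<^sup>2 * lh) \<le> G / (1 + Ch\<^sup>2 * G)" using frac_mono lh0 Ch2 by blast
    also have "G / (1 + Ch\<^sup>2 * G) = lam" unfolding G_def using t1 by (simp add: field_simps)
    finally show ?thesis .
  qed
  have "lh / (1 + Ch\<^sup>2 * lh) \<le> Inf SV" using SVne main by (rule cInf_greatest)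
  then show ?thesis unfolding eV eh lh_def .
qed



end
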